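(* Let $\mathcal{G}$ be an SPQN over binary random variables $X_1,\dots,X_N$ which is conditionally complete, conditionally decomposable and conditionally sound. Then for every node $v$ of $\mathcal{G}$, $\Psi_v$ is a normalized probability function over the variables indexed by $\mathrm{eff}(v)$ conditioned on the variables indexed by $\mathrm{cond}(v)$; precisely, for every $\mathbf b\in\{0,1,*\}^N$ with $b_i\in\{0,1\}$ for $i\in\mathrm{cond}(v)$ and $b_i=*$ for $i\notin\mathrm{cond}(v)$, $$\sum_{\substack{\mathbf x\in\{0,1,*\}^N:\\ x_i=b_i\ \forall i\notin \mathrm{eff}(v),\\ x_i\in\{0,1\}\ \forall i\in\mathrm{eff}(v)}}\Psi_v(\mathbf x)=1 .$$
   Context: An SPQN (Sum-Product-Quotient Network) over binary variables $X_1,\dots,X_N$ is a rooted directed acyclic computational graph evaluated on inputs $\mathbf x\in\{0,1,*\}^N$ ($*$ denotes a missing value). Its nodes are of four types. Leaves are indicators $\mathbb 1[x_i=a]$, $i\in[N]$, $a\in\{0,1\}$, whose value is $1$ if $x_i=a$, $0$ if $x_i=1-a$, and $1$ if $x_i=*$. A sum node $v$ outputs $\sum_{c}w_c\Psi_c(\mathbf x)$ over its children $c$, with strictly positive weights summing to $1$. A product node outputs $\prod_c\Psi_c(\mathbf x)$ over its children. A quotient node $v$ has exactly two children, a numerator $\mathrm{num}(v)$ and a denominator $\mathrm{den}(v)$, and outputs $\Psi_{\mathrm{num}(v)}(\mathbf x)/\Psi_{\mathrm{den}(v)}(\mathbf x)$. $\Psi_v$ denotes the function computed by the subgraph rooted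 at $v$; $\mathrm{ch}(v)$ is the set of children of $v$. Scope: $\mathrm{sc}(v)=\{i\}$ for a leaf of variable $i$, and $\mathrm{sc}(v)=\bigcup_{c\in\mathrm{ch}(v)}\mathrm{sc}(c)$ otherwise. Effective scope: $\mathrm{eff}(v)=\{i\}$ for a leaf of variable $i$; $\mathrm{eff}(v)=\bigcup_{c\in\mathrm{ch}(v)}\mathrm{eff}(c)$ for sum and product nodes; $\mathrm{eff}(v)=\mathrm{eff}(\mathrm{num}(v))\setminus\mathrm{eff}(\mathrm{den}(v))$ for quotient nodes. Conditioning scope: $\mathrm{cond}(v)=\mathrm{sc}(v)\setminus\mathrm{eff}(v)$. Conditionally complete: for every sum node $v$ and all $c_1,c_2\in\mathrm{ch}(v)$, $\mathrm{eff}(c_1)=\mathrm{eff}(c_2)$. Conditionally decomposable: for every product node $v$, (1) for all distinct $c_1,c_2\in\mathrm{ch}(v)$, $\mathrm{eff}(c_1)\cap\mathrm{eff}(c_2)=\emptyset$; and (2) the directed graph on vertex set $\mathrm{ch}(v)$ with an edge $c'\to c''$ whenever $\mathrm{eff}(c')\cap\mathrm{cond}(c'')\neq\emptyset$ is acyclic. Conditionally sound: for every quotient node $v$, $\Psi_{\mathrm{den}(v)}$ is strictly positive on all inputs, $\mathrm{cond}(\mathrm{den}(v))\subseteq\mathrm{cond}(\mathrm{num}(v))$, $\mathrm{eff}(\mathrm{den}(v))\subseteq\mathrm{eff}(\mathrm{num}(v))$, and for all $\mathbf a\in\{0,1,*\}^N$, $\Psi_{\mathrm{den}(v)}(\mathbf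 a)=\sum_{\mathbf z}\Psi_{\mathrm{num}(v)}(\mathbf z)$, the sum over $\mathbf z\in\{0,1,*\}^N$ with $z_i=a_i$ for $i\notin\mathrm{eff}(v)$ and $z_i\in\{0,1\}$ for $i\in\mathrm{eff}(v)$. *)

theory Defs
  imports Complex_Main
begin

text \<open>Values of an input: None = missing (*), Some False = 0, Some True = 1.
  An input over X_1..X_N is a function nat => bool option that is None outside {1..N}.\<close>

type_synonym input = "nat \<Rightarrow> bool option"

definition inputs :: "nat \<Rightarrow> input set" where
  "inputs N = {x. \<forall>i. i \<notin> {1..N} \<longrightarrow> x i = None}"

text \<open>A rooted DAG is represented by its (finite) unfolding into a term;
  every node of the DAG corresponds to a subterm.\<close>

datatype node =
    Leaf nat bool
  | SumN "(real \<times> node) list"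
  | ProdN "node list"
  | QuotN node node

fun Psi :: "node \<Rightarrow> input \<Rightarrow> real" where
  "Psi (Leaf i a) x = (case x i of None \<Rightarrow> 1 | Some b \<Rightarrow> (if b = a then 1 else 0))"
| "Psi (SumN cs) x = sum_list (map (\<lambda>p. fst p * Psi (snd p) x) cs)"
| "Psi (ProdN cs) x = prod_list (map (\<lambda>c. Psi c x) cs)"
| "Psi (QuotN n d) x = Psi n x / Psi d x"

fun sc :: "node \<Rightarrow> nat set" where
  "sc (Leaf i a) = {i}"
| "sc (SumN cs) = (\<Union>p\<in>set cs. sc (snd p))"
| "sc (ProdN cs) = (\<Union>c\<in>set cs. sc c)"
| "sc (QuotN n d) = sc n \<union> sc d"

fun eff :: "node \<Rightarrow> nat set" where
  "eff (Leaf i a) = {i}"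
| "eff (SumN cs) = (\<Union>p\<in>set cs. eff (snd p))"
| "eff (ProdN cs) = (\<Union>c\<in>set cs. eff c)"
| "eff (QuotN n d) = eff n - eff d"

definition cond :: "node \<Rightarrow> nat set" where
  "cond v = sc v - eff v"

fun nodes :: "node \<Rightarrow> node set" where
  "nodes (Leaf i a) = {Leaf i a}"
| "nodes (SumN cs) = insert (SumN cs) (\<Union>p\<in>set cs. nodes (snd p))"
| "nodes (ProdN cs) = insert (ProdN cs) (\<Union>c\<in>set cs. nodes c)"
| "nodes (QuotN n d) = insert (QuotN n d) (nodes n \<union> nodes d)"

definition completions :: "input \<Rightarrow> nat set \<Rightarrow> input set" where
  "completions a S = {z. (\<forall>i. i \<notin> S \<longrightarrow> z i = a i) \<and> (\<forall>i\<in>S. z i \<noteq> None)}"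

definition spqn :: "nat \<Rightarrow> node \<Rightarrow> bool" where
  "spqn N G \<longleftrightarrow> (\<forall>v\<in>nodes G.
      (case v of
        Leaf i a \<Rightarrow> i \<in> {1..N}
      | SumN cs \<Rightarrow> (\<forall>p\<in>set cs. fst p > 0) \<and> sum_list (map fst cs) = 1
      | _ \<Rightarrow> True))"

definition cond_complete :: "node \<Rightarrow> bool" where
  "cond_complete G \<longleftrightarrow> (\<forall>v\<in>nodes G.
      (case v of
        SumN cs \<Rightarrow> (\<forall>c1\<in>snd ` set cs. \<forall>c2\<in>snd ` set cs. eff c1 = eff c2)
      | _ \<Rightarrow> True))"

definition cond_decomposable :: "node \<Rightarrow> bool" where
  "cond_decomposable G \<longleftrightarrow> (\<forall>v\<in>nodes G.
      (case v of
        ProdN cs \<Rightarrow>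
          (\<forall>i<length cs. \<forall>j<length cs. i \<noteq> j \<longrightarrow> eff (cs ! i) \<inter> eff (cs ! j) = {}) \<and>
          acyclic {(i, j). i < length cs \<and> j < length cs \<and> eff (cs ! i) \<inter> cond (cs ! j) \<noteq> {}}
      | _ \<Rightarrow> True))"

definition cond_sound :: "nat \<Rightarrow> node \<Rightarrow> bool" where
  "cond_sound N G \<longleftrightarrow> (\<forall>v\<in>nodes G.
      (case v of
        QuotN n d \<Rightarrow>
          (\<forall>x\<in>inputs N. Psi d x > 0) \<and>
          cond d \<subseteq> cond n \<and> eff d \<subseteq> eff n \<and>
          (\<forall>a\<in>inputs N. Psi d a = (\<Sum>z\<in>completions a (eff (QuotN n d)). Psi n z))
      | _ \<Rightarrow> True))"

end

theory Submission
  imports Defs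
begin

lemma node_ind[case_names Leaf SumN ProdN QuotN]:
  assumes "\<And>i a. P (Leaf i a)"
    and "\<And>cs. (\<And>p. p \<in> set cs \<Longrightarrow> P (snd p)) \<Longrightarrow> P (SumN cs)"
    and "\<And>cs. (\<And>c. c \<in> set cs \<Longrightarrow> P c) \<Longrightarrow> P (ProdN cs)"
    and "\<And>n d. P n \<Longrightarrow> P d \<Longrightarrow> P (QuotN n d)"
  shows "P v"
  by (induction v rule: node.induct) (auto intro: assms simp: snds.simps)

lemma nodes_self: "v \<in> nodes v"
  by (cases v) auto

lemma nodes_trans: "u \<in> nodes v \<Longrightarrow> w \<in> nodes u \<Longrightarrow> w \<in> nodes v"
proof (induction v rule: node_ind)
  case (SumN cs)
  show ?case
  proof (cases "u = SumN cs")
    case False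
    then obtain p where "p \<in> set cs" "u \<in> nodes (snd p)" using SumN.prems by auto
    then show ?thesis using SumN.IH[of p] SumN.prems by auto
  qed (use SumN.prems in auto)
next
  case (ProdN cs)
  show ?case
  proof (cases "u = ProdN cs")
    case False
    then obtain c where "c \<in> set cs" "u \<in> nodes c" using ProdN.prems by auto
    then show ?thesis using ProdN.IH[of c] ProdN.prems by auto
  qed (use ProdN.prems in auto)
qed auto

lemma sc_leaf: "i \<in> sc v \<Longrightarrow> \<exists>a. Leaf i a \<in> nodes v"
proof (induction v rule: node_ind)
  case (SumN cs)
  then obtain p where "p \<in> set cs" "i \<in> sc (snd p)" by auto
  then show ?case using SumN.IH[of p] by auto
next
  case (ProdN cs)
  then obtain c where "c \<in> set cs" "i \<in> sc c" by auto
  then show ?case using ProdN.IH[of c] by auto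
qed auto

lemma finite_sc: "finite (sc v)"
  by (induction v rule: node_ind) auto

lemma eff_sc: "eff v \<subseteq> sc v"
  by (induction v rule: node_ind) auto

lemma finite_eff: "finite (eff v)"
  using finite_sc eff_sc finite_subset by blast

lemma Psi_local: "(\<forall>i\<in>sc v. x i = y i) \<Longrightarrow> Psi v x = Psi v y"
proof (induction v rule: node_ind)
  case (SumN cs)
  have "\<And>p. p \<in> set cs \<Longrightarrow> Psi (snd p) x = Psi (snd p) y"
    using SumN by auto
  then show ?case by (simp cong: map_cong)
next
  case (ProdN cs)
  then show ?case by (simp cong: map_cong)
qed auto

lemma completions_empty: "completions b {} = {b}"
  unfolding completions_def by auto

lemma finite_completions: "finite S \<Longrightarrow> finite (completions b S)"
proof (induction S rule: finite_induct)
  case empty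
  then show ?case by (simp add: completions_empty)
next
  case (insert i S)
  have "completions b (insert i S) \<subseteq> (\<lambda>(z,v). z(i:=Some v)) ` (completions b S \<times> UNIV)"
  proof
    fix z assume z: "z \<in> completions b (insert i S)"
    then obtain v where v: "z i = Some v" unfolding completions_def by auto
    have "z(i := b i) \<in> completions b S" using z insert.hyps unfolding completions_def by auto
    moreover have "z = (z(i := b i))(i := Some v)" using v by auto
    ultimately show "z \<in> (\<lambda>(z,v). z(i:=Some v)) ` (completions b S \<times> UNIV)"
      by (metis (no_types, lifting) SigmaI UNIV_I case_prod_conv image_eqI)
  qed
  moreover have "finite ((\<lambda>(z,v). z(i:=Some v)) ` (completions b S \<times> (UNIV::bool set)))"
    using insert.IH by simp
  ultimately show ?case using finite_subset by blast
qed

lemma completions_split: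
  assumes "finite A" "finite B" "A \<inter> B = {}"
  shows "(\<Sum>z\<in>completions b (A \<union> B). f z) =
         (\<Sum>y\<in>completions b A. \<Sum>z\<in>completions y B. f z)"
proof -
  define g where "g z = (\<lambda>j. if j \<in> B then b j else z j)" for z :: input
  have fin: "finite (completions b (A \<union> B))" "finite (completions b A)"
    using assms finite_completions by auto
  have img: "g ` completions b (A \<union> B) \<subseteq> completions b A"
    using assms(3) unfolding g_def completions_def by auto
  have eq: "{z \<in> completions b (A \<union> B). g z = y} = completions y B"
    if y: "y \<in> completions b A" for y
  proof
    show "{z \<in> completions b (A \<union> B). g z = y} \<subseteq> completions y B"
      unfolding g_def completions_def by (auto simp: fun_eq_iff)
    show "completions y B \<subseteq> {z \<in> completions b (A \<union> B). g z = y}"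
      using y assms(3) unfolding g_def completions_def by (auto simp: fun_eq_iff)
  qed
  show ?thesis
    using sum.group[OF fin(1) fin(2) img, of f] eq by simp
qed

lemma completions_single: "completions b {i} = {b(i := Some True), b(i := Some False)}"
proof (rule set_eqI)
  fix z
  show "z \<in> completions b {i} \<longleftrightarrow> z \<in> {b(i := Some True), b(i := Some False)}"
  proof
    assume z: "z \<in> completions b {i}"
    then obtain v where v: "z i = Some v" unfolding completions_def by auto
    have "z = b(i := Some v)" using z v unfolding completions_def by (auto simp: fun_eq_iff)
    then show "z \<in> {b(i := Some True), b(i := Some False)}" by (cases v) auto
  next
    assume "z \<in> {b(i := Some True), b(i := Some False)}"
    then show "z \<in> completions b {i}" unfolding completions_def by auto
  qed
qed

fun good :: "node list \<Rightarrow> bool" where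
  "good [] = True"
| "good (c # rest) = ((\<forall>d\<in>set rest. eff d \<inter> cond c = {} \<and> eff c \<inter> eff d = {}) \<and> good rest)"

lemma prod_lemma:
  assumes "good ds"
    and "\<forall>c\<in>set ds. \<forall>b\<in>inputs N. (\<forall>i\<in>cond c. b i \<noteq> None) \<longrightarrow>
            (\<Sum>x\<in>completions b (eff c). Psi c x) = 1"
    and "\<forall>c\<in>set ds. sc c \<subseteq> {1..N}"
    and "b \<in> inputs N"
    and "\<forall>i\<in>(\<Union>c\<in>set ds. sc c) - (\<Union>c\<in>set ds. eff c). b i \<noteq> None"
  shows "(\<Sum>x\<in>completions b (\<Union>c\<in>set ds. eff c). prod_list (map (\<lambda>c. Psi c x) ds)) = 1"
  using assms
proof (induction ds arbitrary: b)
  case Nil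
  then show ?case by (simp add: completions_empty)
next
  case (Cons c rest)
  define B where "B = (\<Union>d\<in>set rest. eff d)"
  have disj: "eff c \<inter> B = {}" and cdisj: "cond c \<inter> B = {}"
    using Cons.prems(1) unfolding B_def by auto
  have finB: "finite B" unfolding B_def using finite_eff by auto
  have "(\<Sum>x\<in>completions b (\<Union>d\<in>set (c # rest). eff d). prod_list (map (\<lambda>d. Psi d x) (c # rest)))
      = (\<Sum>y\<in>completions b (eff c). \<Sum>z\<in>completions y B. Psi c z * prod_list (map (\<lambda>d. Psi d z) rest))"
    using completions_split[OF finite_eff finB disj] by (simp add: B_def)
  also have "\<dots> = (\<Sum>y\<in>completions b (eff c). Psi c y * (\<Sum>z\<in>completions y B. prod_list (map (\<lambda>d. Psi d z) rest)))"
  proof (rule sum.cong[OF refl])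
    fix y assume y: "y \<in> completions b (eff c)"
    have "Psi c z = Psi c y" if z: "z \<in> completions y B" for z
    proof (rule Psi_local, rule ballI)
      fix i assume "i \<in> sc c"
      then have "i \<notin> B" using disj cdisj unfolding cond_def by auto
      then show "z i = y i" using z unfolding completions_def by auto
    qed
    then show "(\<Sum>z\<in>completions y B. Psi c z * prod_list (map (\<lambda>d. Psi d z) rest))
        = Psi c y * (\<Sum>z\<in>completions y B. prod_list (map (\<lambda>d. Psi d z) rest))"
      by (simp add: sum_distrib_left)
  qed
  also have "\<dots> = (\<Sum>y\<in>completions b (eff c). Psi c y)"
  proof (rule sum.cong[OF refl])
    fix y assume y: "y \<in> completions b (eff c)"
    have yin: "y \<in> inputs N"
    proof -
      have "eff c \<subseteq> {1..N}" using Cons.prems(3) eff_sc by force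
      show ?thesis unfolding inputs_def
      proof (intro CollectI allI impI)
        fix i assume i: "i \<notin> {1..N}"
        then have "i \<notin> eff c" using \<open>eff c \<subseteq> {1..N}\<close> by auto
        then have "y i = b i" using y unfolding completions_def by auto
        then show "y i = None" using i Cons.prems(4) unfolding inputs_def by auto
      qed
    qed
    have "(\<Sum>z\<in>completions y B. prod_list (map (\<lambda>d. Psi d z) rest)) = 1"
      unfolding B_def
    proof (rule Cons.IH)
      show "good rest" using Cons.prems(1) by simp
      show "\<forall>c\<in>set rest. \<forall>b\<in>inputs N. (\<forall>i\<in>cond c. b i \<noteq> None) \<longrightarrow>
            (\<Sum>x\<in>completions b (eff c). Psi c x) = 1" using Cons.prems(2) by simp
      show "\<forall>c\<in>set rest. sc c \<subseteq> {1..N}" using Cons.prems(3) by simp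
      show "y \<in> inputs N" by (rule yin)
      show "\<forall>i\<in>(\<Union>c\<in>set rest. sc c) - (\<Union>c\<in>set rest. eff c). y i \<noteq> None"
      proof
        fix i assume i: "i \<in> (\<Union>c\<in>set rest. sc c) - (\<Union>c\<in>set rest. eff c)"
        show "y i \<noteq> None"
        proof (cases "i \<in> eff c")
          case True then show ?thesis using y unfolding completions_def by auto
        next
          case False
          then have "y i = b i" using y unfolding completions_def by auto
          moreover have "b i \<noteq> None" using Cons.prems(5) i False by auto
          ultimately show ?thesis by simp
        qed
      qed
    qed
    then show "Psi c y * (\<Sum>z\<in>completions y B. prod_list (map (\<lambda>d. Psi d z) rest)) = Psi c y"
      by simp
  qed
  also have "\<dots> = 1"
  proof -
    have "\<forall>i\<in>cond c. b i \<noteq> None"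
    proof
      fix i assume i: "i \<in> cond c"
      then have "i \<in> sc c" "i \<notin> eff c" unfolding cond_def by auto
      moreover have "i \<notin> B" using i cdisj by auto
      ultimately show "b i \<noteq> None" using Cons.prems(5) unfolding B_def by auto
    qed
    then show ?thesis using Cons.prems(2,4) by simp
  qed
  finally show ?case .
qed

fun fgood :: "(nat \<times> nat) set \<Rightarrow> nat list \<Rightarrow> bool" where
  "fgood R [] = True"
| "fgood R (k # ks) = ((\<forall>j\<in>set ks. (j, k) \<notin> R) \<and> fgood R ks)"

lemma topo:
  assumes "finite S" "wf R"
  shows "\<exists>ks. set ks = S \<and> distinct ks \<and> fgood R ks"
  using assms
proof (induction S rule: finite_psubset_induct)
  case (psubset S)
  show ?case
  proof (cases "S = {}")
    case True
    then show ?thesis by (intro exI[of _ "[]"]) simp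
  next
    case False
    then obtain x where "x \<in> S" by blast
    then obtain k where k: "k \<in> S" "\<forall>y. (y, k) \<in> R \<longrightarrow> y \<notin> S"
      using psubset.prems(1) \<open>x \<in> S\<close> unfolding wf_eq_minimal by metis
    obtain ks where ks: "set ks = S - {k}" "distinct ks" "fgood R ks"
      using psubset.IH[of "S - {k}"] k(1) psubset.prems by blast
    show ?thesis
      using ks k by (intro exI[of _ "k # ks"]) auto
  qed
qed

lemma good_map:
  assumes "fgood R ks" "distinct ks" "set ks \<subseteq> {..<length cs}"
    and "R = {(i, j). i < length cs \<and> j < length cs \<and> eff (cs ! i) \<inter> cond (cs ! j) \<noteq> {}}"
    and "\<forall>i<length cs. \<forall>j<length cs. i \<noteq> j \<longrightarrow> eff (cs ! i) \<inter> eff (cs ! j) = {}"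
  shows "good (map (\<lambda>i. cs ! i) ks)"
  using assms
proof (induction ks)
  case Nil then show ?case by simp
next
  case (Cons k ks)
  have "\<forall>j\<in>set ks. eff (cs ! j) \<inter> cond (cs ! k) = {} \<and> eff (cs ! k) \<inter> eff (cs ! j) = {}"
  proof
    fix j assume j: "j \<in> set ks"
    then have "j \<noteq> k" "j < length cs" "k < length cs" using Cons.prems(2,3) by auto
    then show "eff (cs ! j) \<inter> cond (cs ! k) = {} \<and> eff (cs ! k) \<inter> eff (cs ! j) = {}"
      using Cons.prems(1,4,5) j by auto
  qed
  then show ?case using Cons by auto
qed

lemma main:
  assumes sp: "spqn N G" and cc: "cond_complete G" and cd: "cond_decomposable G"
    and cs: "cond_sound N G"
  shows "v \<in> nodes G \<Longrightarrow> \<forall>b\<in>inputs N. (\<forall>i\<in>cond v. b i \<noteq> None) \<longrightarrow>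
           (\<Sum>x\<in>completions b (eff v). Psi v x) = 1"
proof (induction v rule: node_ind)
  case (Leaf i a)
  show ?case
  proof (intro ballI impI)
    fix b assume "b \<in> inputs N"
    have "b(i := Some True) \<noteq> b(i := Some False)" by (metis fun_upd_same option.inject)
    then show "(\<Sum>x\<in>completions b (eff (Leaf i a)). Psi (Leaf i a) x) = 1"
      by (simp add: completions_single)
  qed
next
  case (SumN cs)
  have wprop: "(\<forall>p\<in>set cs. fst p > 0) \<and> sum_list (map fst cs) = 1"
    using bspec[OF sp[unfolded spqn_def] SumN.prems] unfolding node.case .
  then have ne: "cs \<noteq> []" by auto
  have alleq: "\<forall>c1\<in>snd ` set cs. \<forall>c2\<in>snd ` set cs. eff c1 = eff c2"
    using bspec[OF cc[unfolded cond_complete_def] SumN.prems] unfolding node.case .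
  have effeq: "eff (snd p) = eff (SumN cs)" if p: "p \<in> set cs" for p
  proof -
    have "eff (SumN cs) = (\<Union>q\<in>set cs. eff (snd q))" by (simp only: eff.simps)
    also have "\<dots> = eff (snd p)"
    proof
      show "(\<Union>q\<in>set cs. eff (snd q)) \<subseteq> eff (snd p)"
      proof
        fix i assume "i \<in> (\<Union>q\<in>set cs. eff (snd q))"
        then obtain q where q: "q \<in> set cs" "i \<in> eff (snd q)" by blast
        have "eff (snd q) = eff (snd p)" using alleq q(1) p by blast
        then show "i \<in> eff (snd p)" using q(2) by simp
      qed
      show "eff (snd p) \<subseteq> (\<Union>q\<in>set cs. eff (snd q))" using p by blast
    qed
    finally show ?thesis by simp
  qed
  have sub: "snd p \<in> nodes G" if "p \<in> set cs" for p
  proof -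
    have "snd p \<in> nodes (snd p)" by (rule nodes_self)
    then have "snd p \<in> nodes (SumN cs)" using that by (simp only: nodes.simps) blast
    then show ?thesis using nodes_trans[OF SumN.prems] by blast
  qed
  have sumlist: "(\<Sum>x\<in>X. sum_list (map (\<lambda>p. f p x) ps)) = sum_list (map (\<lambda>p. \<Sum>x\<in>X. f p x) ps)"
    for X :: "input set" and f :: "real \<times> node \<Rightarrow> input \<Rightarrow> real" and ps
    by (induction ps) (auto simp: sum.distrib)
  define E where "E = eff (SumN cs)"
  have effE: "eff (snd p) = E" if "p \<in> set cs" for p
    using effeq[OF that] unfolding E_def .
  show ?case
  proof (intro ballI impI)
    fix b assume b: "b \<in> inputs N" "\<forall>i\<in>cond (SumN cs). b i \<noteq> None"
    have one: "(\<Sum>x\<in>completions b E. Psi (snd p) x) = 1" if p: "p \<in> set cs" for p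
    proof -
      have "sc (snd p) \<subseteq> sc (SumN cs)" using p by auto
      then have "cond (snd p) \<subseteq> cond (SumN cs)"
        unfolding cond_def effE[OF p] E_def[symmetric] by blast
      then have "\<forall>i\<in>cond (snd p). b i \<noteq> None" using b by blast
      then have "(\<Sum>x\<in>completions b (eff (snd p)). Psi (snd p) x) = 1"
        using SumN.IH[OF p sub[OF p]] b(1) by blast
      then show ?thesis unfolding effE[OF p] .
    qed
    have "(\<Sum>x\<in>completions b E. Psi (SumN cs) x)
        = sum_list (map (\<lambda>p. \<Sum>x\<in>completions b E. fst p * Psi (snd p) x) cs)"
      using sumlist[where X="completions b E" and f="\<lambda>p x. fst p * Psi (snd p) x" and ps=cs] by simp
    also have "\<dots> = sum_list (map fst cs)"
      by (rule arg_cong[where f=sum_list], rule map_cong[OF refl])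
         (simp add: sum_distrib_left[symmetric] one)
    finally show "(\<Sum>x\<in>completions b (eff (SumN cs)). Psi (SumN cs) x) = 1"
      using wprop unfolding E_def by simp
  qed
next
  case (ProdN cs)
  let ?R = "{(i, j). i < length cs \<and> j < length cs \<and> eff (cs ! i) \<inter> cond (cs ! j) \<noteq> {}}"
  have dec: "(\<forall>i<length cs. \<forall>j<length cs. i \<noteq> j \<longrightarrow> eff (cs ! i) \<inter> eff (cs ! j) = {}) \<and> acyclic ?R"
    using bspec[OF cd[unfolded cond_decomposable_def] ProdN.prems] unfolding node.case .
  have "finite ?R" by (rule finite_subset[of _ "{..<length cs} \<times> {..<length cs}"]) auto
  then have "wf ?R" using dec finite_acyclic_wf by blast
  then obtain ks where ks: "set ks = {..<length cs}" "distinct ks" "fgood ?R ks"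
    using topo by blast
  define ds where "ds = map (\<lambda>i. cs ! i) ks"
  have gd: "good ds" unfolding ds_def
    by (rule good_map[OF ks(3) ks(2) equalityD1[OF ks(1)] refl conjunct1[OF dec]])
  have setds: "set ds = set cs"
  proof -
    have "set ds = (\<lambda>i. cs ! i) ` {..<length cs}" unfolding ds_def using ks(1) by simp
    also have "\<dots> = set cs" by (metis atLeast0LessThan list.set_map map_nth set_upt)
    finally show ?thesis .
  qed
  have prodeq: "prod_list (map (\<lambda>c. Psi c x) ds) = prod_list (map (\<lambda>c. Psi c x) cs)" for x
  proof -
    have "prod_list (map (\<lambda>c. Psi c x) ds) = prod (\<lambda>i. Psi (cs ! i) x) (set ks)"
      unfolding ds_def using ks(2) by (simp add: prod.distinct_set_conv_list o_def)
    also have "\<dots> = prod (\<lambda>i. Psi (cs ! i) x) {0..<length cs}"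
      using ks(1) by (simp add: lessThan_atLeast0)
    also have "\<dots> = prod_list (map (\<lambda>c. Psi c x) cs)"
      by (simp add: prod.list_conv_set_nth)
    finally show ?thesis .
  qed
  have child: "c \<in> nodes G" if "c \<in> set cs" for c
  proof -
    have "c \<in> nodes c" by (rule nodes_self)
    then have "c \<in> nodes (ProdN cs)" using that by (simp only: nodes.simps) blast
    then show ?thesis using nodes_trans[OF ProdN.prems] by blast
  qed
  have scN: "sc c \<subseteq> {1..N}" if "c \<in> nodes G" for c
  proof
    fix i assume "i \<in> sc c"
    then obtain a where "Leaf i a \<in> nodes c" using sc_leaf by blast
    then have "Leaf i a \<in> nodes G" using nodes_trans that by blast
    then show "i \<in> {1..N}" using bspec[OF sp[unfolded spqn_def], of "Leaf i a"] by simp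
  qed
  show ?case
  proof (intro ballI impI)
    fix b assume b: "b \<in> inputs N" "\<forall>i\<in>cond (ProdN cs). b i \<noteq> None"
    have "(\<Sum>x\<in>completions b (\<Union>c\<in>set ds. eff c). prod_list (map (\<lambda>c. Psi c x) ds)) = 1"
    proof (rule prod_lemma[OF gd])
      show "\<forall>c\<in>set ds. \<forall>b\<in>inputs N. (\<forall>i\<in>cond c. b i \<noteq> None) \<longrightarrow>
            (\<Sum>x\<in>completions b (eff c). Psi c x) = 1"
      proof (rule ballI)
        fix c assume "c \<in> set ds"
        then have c: "c \<in> set cs" using setds by simp
        show "\<forall>b\<in>inputs N. (\<forall>i\<in>cond c. b i \<noteq> None) \<longrightarrow>
            (\<Sum>x\<in>completions b (eff c). Psi c x) = 1"
          using ProdN.IH[OF c child[OF c]] .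
      qed
      show "\<forall>c\<in>set ds. sc c \<subseteq> {1..N}" using scN child setds by simp
      show "b \<in> inputs N" by (rule b(1))
      show "\<forall>i\<in>(\<Union>c\<in>set ds. sc c) - (\<Union>c\<in>set ds. eff c). b i \<noteq> None"
        using b(2) setds unfolding cond_def by simp
    qed
    then show "(\<Sum>x\<in>completions b (eff (ProdN cs)). Psi (ProdN cs) x) = 1"
      using setds prodeq by simp
  qed
next
  case (QuotN n d)
  have q: "(\<forall>x\<in>inputs N. Psi d x > 0) \<and> cond d \<subseteq> cond n \<and> eff d \<subseteq> eff n \<and>
          (\<forall>a\<in>inputs N. Psi d a = (\<Sum>z\<in>completions a (eff (QuotN n d)). Psi n z))"
    using bspec[OF cs[unfolded cond_sound_def] QuotN.prems] unfolding node.case .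
  show ?case
  proof (intro ballI impI)
    fix b assume b: "b \<in> inputs N" "\<forall>i\<in>cond (QuotN n d). b i \<noteq> None"
    have loc: "Psi d x = Psi d b" if x: "x \<in> completions b (eff (QuotN n d))" for x
    proof (rule Psi_local, rule ballI)
      fix i assume i: "i \<in> sc d"
      have "i \<notin> eff (QuotN n d)"
      proof
        assume ie: "i \<in> eff (QuotN n d)"
        then have "i \<notin> eff d" "i \<in> eff n" by auto
        then have "i \<in> cond d" using i unfolding cond_def by auto
        then have "i \<in> cond n" using q by auto
        then show False using \<open>i \<in> eff n\<close> unfolding cond_def by auto
      qed
      then show "x i = b i" using x unfolding completions_def by auto
    qed
    have "(\<Sum>x\<in>completions b (eff (QuotN n d)). Psi (QuotN n d) x)
        = (\<Sum>x\<in>completions b (eff (QuotN n d)). Psi n x / Psi d b)"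
      by (rule sum.cong[OF refl]) (simp add: loc)
    also have "\<dots> = (\<Sum>x\<in>completions b (eff (QuotN n d)). Psi n x) / Psi d b"
      by (simp add: sum_divide_distrib)
    also have "\<dots> = 1" using q b(1) by (metis less_irrefl divide_self)
    finally show "(\<Sum>x\<in>completions b (eff (QuotN n d)). Psi (QuotN n d) x) = 1" .
  qed
qed

theorem theorem1:
  fixes N :: nat and G :: node
  assumes "spqn N G"
    and "cond_complete G"
    and "cond_decomposable G"
    and "cond_sound N G"
  shows "\<forall>v\<in>nodes G. \<forall>b.
           ((\<forall>i\<in>cond v. b i \<noteq> None) \<and> (\<forall>i. i \<notin> cond v \<longrightarrow> b i = None)) \<longrightarrow>
           (\<Sum>x\<in>completions b (eff v). Psi v x) = 1"
proof (intro ballI allI impI)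
  fix v and b :: input assume v: "v \<in> nodes G" and b: "(\<forall>i\<in>cond v. b i \<noteq> None) \<and> (\<forall>i. i \<notin> cond v \<longrightarrow> b i = None)"
  have "sc v \<subseteq> {1..N}"
  proof
    fix i assume "i \<in> sc v"
    then obtain a where "Leaf i a \<in> nodes v" using sc_leaf by blast
    then have "Leaf i a \<in> nodes G" using nodes_trans v by blast
    then show "i \<in> {1..N}" using bspec[OF assms(1)[unfolded spqn_def], of "Leaf i a"] by simp
  qed
  then have "b \<in> inputs N" using b unfolding inputs_def cond_def by auto
  then show "(\<Sum>x\<in>completions b (eff v). Psi v x) = 1"
    using main[OF assms v] b by blast
qed

end
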